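(* Let $E$ be a set, let $\Sigma^{(0)}_E$ be the group of permutations of $E$ fixing all but finitely many elements of $E$, and let $\Sigma_E$ be the set of virtual permutations of $E$. For every $g \in \Sigma^{(0)}_E$ and every $\sigma = (\sigma_I)_{I \in \mathcal{F}(E)} \in \Sigma_E$, there exists a unique virtual permutation $g\sigma g^{-1} = (\sigma'_I)_{I \in \mathcal{F}(E)} \in \Sigma_E$ such that $\sigma'_I = g_I \sigma_I g_I^{-1}$ for every finite $I \subset E$ containing all points of $E$ not fixed by $g$, where $g_I$ denotes the restriction of $g$ to $I$. The map $(g,\sigma) \mapsto g\sigma g^{-1}$ is a group action of $\Sigma^{(0)}_E$ on $\Sigma_E$, and the cycles of $g\sigma g^{-1}$ are the images by $g$ of the cycles of $\sigma$.
   Context: $\mathcal{F}(E)$ denotes the set of finite subsets of $E$, $\Sigma_I$ the symmetric group of a finite set $I$. For finite $I \subset J$ and $\tau \in \Sigma_J$, $\pi_{J,I}(\tau) \in \Sigma_I$ ("removing the elements of $J\setminus I$ from the cycle structure of $\tau$") is defined by $\pi_{J,I}(\tau)(x) = \tau^m(x)$ with $m\geq 1$ minimal such that $\tau^m(x) \in I$. A virtual permutation of $E$ is a family $(\sigma_I)_{I \in \mathcal{F}(E)}$ with $\sigma_I \in \Sigma_I$ and $\sigma_I = \pi_{J,I}(\sigma_J)$ for all finite $I \subset J$. For a virtual permutation $\sigma$, two elements $x,y \in E$ are equivalent if they lie in the same cycle of $\sigma_I$ for some (equivalently, every) finite $I$ containing both; the equivalence classes are called the cycles of $\sigma$. *)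

theory Defs
  imports "HOL-Combinatorics.Permutations"
begin

definition proj_perm :: "'a set \<Rightarrow> 'a set \<Rightarrow> ('a \<Rightarrow> 'a) \<Rightarrow> ('a \<Rightarrow> 'a)" where
  "proj_perm J I \<tau> = (\<lambda>x. if x \<in> I then (\<tau> ^^ (LEAST m. 0 < m \<and> (\<tau> ^^ m) x \<in> I)) x else x)"

text \<open>Convention: the family is extended by the identity at indices that are not finite
  subsets of E, so that a virtual permutation is determined by its values on F(E).\<close>
definition virtual_perm :: "'a set \<Rightarrow> ('a set \<Rightarrow> 'a \<Rightarrow> 'a) \<Rightarrow> bool" where
  "virtual_perm E \<sigma> \<longleftrightarrow>
     (\<forall>I. finite I \<and> I \<subseteq> E \<longrightarrow> \<sigma> I permutes I) \<and>
     (\<forall>I. \<not> (finite I \<and> I \<subseteq> E) \<longrightarrow> \<sigma> I = id) \<and>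
     (\<forall>I J. finite J \<and> J \<subseteq> E \<and> I \<subseteq> J \<longrightarrow> \<sigma> I = proj_perm J I (\<sigma> J))"

definition fin_perm :: "'a set \<Rightarrow> ('a \<Rightarrow> 'a) \<Rightarrow> bool" where
  "fin_perm E g \<longleftrightarrow> g permutes E \<and> finite {x. g x \<noteq> x}"

definition restr_perm :: "('a \<Rightarrow> 'a) \<Rightarrow> 'a set \<Rightarrow> 'a \<Rightarrow> 'a" where
  "restr_perm g I = (\<lambda>x. if x \<in> I then g x else x)"

definition is_conj_vp :: "'a set \<Rightarrow> ('a \<Rightarrow> 'a) \<Rightarrow> ('a set \<Rightarrow> 'a \<Rightarrow> 'a) \<Rightarrow> ('a set \<Rightarrow> 'a \<Rightarrow> 'a) \<Rightarrow> bool" where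
  "is_conj_vp E g \<sigma> \<sigma>' \<longleftrightarrow> virtual_perm E \<sigma>' \<and>
     (\<forall>I. finite I \<and> I \<subseteq> E \<and> {x. g x \<noteq> x} \<subseteq> I \<longrightarrow>
        \<sigma>' I = restr_perm g I \<circ> \<sigma> I \<circ> inv (restr_perm g I))"

definition conj_vp :: "'a set \<Rightarrow> ('a \<Rightarrow> 'a) \<Rightarrow> ('a set \<Rightarrow> 'a \<Rightarrow> 'a) \<Rightarrow> ('a set \<Rightarrow> 'a \<Rightarrow> 'a)" where
  "conj_vp E g \<sigma> = (THE \<sigma>'. is_conj_vp E g \<sigma> \<sigma>')"

definition same_cycle :: "('a \<Rightarrow> 'a) \<Rightarrow> 'a \<Rightarrow> 'a \<Rightarrow> bool" where
  "same_cycle p x y \<longleftrightarrow> (\<exists>n. (p ^^ n) x = y)"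

definition vp_rel :: "'a set \<Rightarrow> ('a set \<Rightarrow> 'a \<Rightarrow> 'a) \<Rightarrow> ('a \<times> 'a) set" where
  "vp_rel E \<sigma> = {(x, y). x \<in> E \<and> y \<in> E \<and>
      (\<exists>I. finite I \<and> I \<subseteq> E \<and> x \<in> I \<and> y \<in> I \<and> same_cycle (\<sigma> I) x y)}"

definition vp_cycles :: "'a set \<Rightarrow> ('a set \<Rightarrow> 'a \<Rightarrow> 'a) \<Rightarrow> 'a set set" where
  "vp_cycles E \<sigma> = E // vp_rel E \<sigma>"

end

theory Submission
  imports Defs "HOL-Combinatorics.Cycles"
begin


lemma perm_order:
  assumes "\<tau> permutes K" "finite K"
  obtains n where "(\<tau> ^^ n) = id" "n > 0"
  using assms permutation_is_nilpotent permutation_permutes by blast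

lemma proj_step:
  assumes "\<tau> permutes K" "finite K" "x \<in> I"
  defines "m \<equiv> LEAST m. 0 < m \<and> (\<tau>^^m) x \<in> I"
  shows "0 < m \<and> (\<tau>^^m) x \<in> I \<and> (\<forall>j. 0<j \<and> j<m \<longrightarrow> (\<tau>^^j) x \<notin> I)
         \<and> proj_perm J I \<tau> x = (\<tau>^^m) x"
proof -
  obtain n where n: "(\<tau> ^^ n) = id" "n > 0" using perm_order assms by blast
  have ex: "0 < n \<and> (\<tau>^^n) x \<in> I" using n assms by simp
  have 1: "0 < m \<and> (\<tau>^^m) x \<in> I" unfolding m_def by (rule LeastI[of _ n], rule ex)
  have 2: "\<forall>j. 0<j \<and> j<m \<longrightarrow> (\<tau>^^j) x \<notin> I" unfolding m_def using not_less_Least by blast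
  show ?thesis using 1 2 assms(3) by (simp add: proj_perm_def m_def)
qed

lemma proj_char:
  assumes "0<M" "(\<tau>^^M) x \<in> I" "\<forall>j. 0<j \<and> j<M \<longrightarrow> (\<tau>^^j) x \<notin> I" "x \<in> I"
  shows "proj_perm J I \<tau> x = (\<tau>^^M) x"
proof -
  have "(LEAST m. 0 < m \<and> (\<tau>^^m) x \<in> I) = M"
    by (rule Least_equality) (use assms in \<open>auto simp: not_less[symmetric]\<close>)
  then show ?thesis using assms(4) by (simp add: proj_perm_def)
qed

lemma proj_out: "x \<notin> I \<Longrightarrow> proj_perm J I \<tau> x = x"
  by (simp add: proj_perm_def)

lemma proj_in:
  assumes "\<tau> permutes K" "finite K" "x \<in> I"
  shows "proj_perm J I \<tau> x \<in> I"
  using proj_step[OF assms] by auto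

lemma proj_inj_aux:
  assumes "\<tau> permutes K" "finite K" "x \<in> I" "y \<in> I"
    and "0 < a" "(\<tau>^^a) x = (\<tau>^^b) y" "a \<le> b" "\<forall>j. 0<j \<and> j<b \<longrightarrow> (\<tau>^^j) y \<notin> I"
  shows "x = y"
proof -
  have inj: "inj (\<tau>^^a)" using assms(1) by (simp add: inj_fn permutes_inj)
  have "(\<tau>^^b) y = (\<tau>^^a) ((\<tau>^^(b-a)) y)"
    using assms(7) by (metis funpow_add le_add_diff_inverse comp_apply)
  then have x: "x = (\<tau>^^(b-a)) y" using assms(6) inj by (metis injD)
  show ?thesis
  proof (cases "b = a")
    case True then show ?thesis using x by simp
  next
    case False
    then have "0 < b - a" "b - a < b" using assms by auto
    then show ?thesis using assms(8) x assms(3) by blast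
  qed
qed

lemma proj_permutes:
  assumes "\<tau> permutes K" "finite K" "finite I"
  shows "proj_perm J I \<tau> permutes I"
proof (rule bij_imp_permutes)
  let ?p = "proj_perm J I \<tau>"
  have sub: "?p ` I \<subseteq> I" using proj_in[OF assms(1,2)] by blast
  have inj: "inj_on ?p I"
  proof (rule inj_onI)
    fix x y assume xy: "x \<in> I" "y \<in> I" "?p x = ?p y"
    define a where "a = (LEAST m. 0 < m \<and> (\<tau>^^m) x \<in> I)"
    define b where "b = (LEAST m. 0 < m \<and> (\<tau>^^m) y \<in> I)"
    note A = proj_step[OF assms(1,2) xy(1), of J, folded a_def]
    note B = proj_step[OF assms(1,2) xy(2), of J, folded b_def]
    have eq: "(\<tau>^^a) x = (\<tau>^^b) y" using A B xy(3) by simp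
    show "x = y"
    proof (cases "a \<le> b")
      case True then show ?thesis using proj_inj_aux[OF assms(1,2) xy(1,2) _ eq] A B by blast
    next
      case False then show ?thesis using proj_inj_aux[OF assms(1,2) xy(2,1) _ eq[symmetric]] A B
        by (metis nat_le_linear)
    qed
  qed
  have "?p ` I = I" using endo_inj_surj[OF assms(3) sub inj] .
  then show "bij_betw ?p I I" using inj by (simp add: bij_betw_def)
  show "\<And>x. x \<notin> I \<Longrightarrow> ?p x = x" by (rule proj_out)
qed

lemma proj_iter:
  assumes "\<tau> permutes K" "finite K" "x \<in> I"
  shows "\<exists>M. ((proj_perm J I \<tau>)^^n) x = (\<tau>^^M) x \<and> ((proj_perm J I \<tau>)^^n) x \<in> I
             \<and> (0 < n \<longleftrightarrow> 0 < M)"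
proof (induction n)
  case 0 then show ?case using assms by (intro exI[of _ 0]) simp
next
  case (Suc n)
  then obtain M where M: "((proj_perm J I \<tau>)^^n) x = (\<tau>^^M) x" "((proj_perm J I \<tau>)^^n) x \<in> I" by blast
  define z where "z = ((proj_perm J I \<tau>)^^n) x"
  define m where "m = (LEAST m. 0 < m \<and> (\<tau>^^m) z \<in> I)"
  note S = proj_step[OF assms(1,2) M(2)[folded z_def], of J, folded m_def]
  have "((proj_perm J I \<tau>)^^Suc n) x = (\<tau>^^(m + M)) x"
    using S M by (simp add: z_def funpow_add)
  then show ?case using S z_def by (intro exI[of _ "m+M"]) auto
qed

lemma funpow_in:
  assumes "p permutes J" "x \<in> J" shows "(p^^k) x \<in> J"
  by (induction k) (simp_all add: permutes_in_image[OF assms(1)] assms(2))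

lemma proj_trans_aux:
  assumes "\<tau> permutes K" "finite K" "finite J" "x \<in> J"
  shows "\<exists>M. (\<tau>^^M) x = ((proj_perm A J \<tau>)^^k) x \<and> (0<k \<longleftrightarrow> 0<M) \<and>
     (\<forall>j. 0<j \<and> j<M \<and> (\<tau>^^j) x \<in> J \<longrightarrow> (\<exists>i. 0<i \<and> i<k \<and> (\<tau>^^j) x = ((proj_perm A J \<tau>)^^i) x))"
proof (induction k)
  case 0 then show ?case by (intro exI[of _ 0]) simp
next
  case (Suc k)
  let ?p = "proj_perm A J \<tau>"
  from Suc obtain M where M: "(\<tau>^^M) x = (?p^^k) x" "(0<k \<longleftrightarrow> 0<M)"
     "\<forall>j. 0<j \<and> j<M \<and> (\<tau>^^j) x \<in> J \<longrightarrow> (\<exists>i. 0<i \<and> i<k \<and> (\<tau>^^j) x = (?p^^i) x)" by blast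
  have pp: "?p permutes J" using proj_permutes assms by blast
  define z where "z = (?p^^k) x"
  have zJ: "z \<in> J" unfolding z_def using funpow_in[OF pp assms(4)] .
  define m where "m = (LEAST m. 0 < m \<and> (\<tau>^^m) z \<in> J)"
  note S = proj_step[OF assms(1,2) zJ, where J=A, folded m_def]
  have e: "(\<tau>^^(m+M)) x = (?p^^Suc k) x" using S M(1) by (simp add: z_def funpow_add)
  have "\<forall>j. 0<j \<and> j<m+M \<and> (\<tau>^^j) x \<in> J \<longrightarrow> (\<exists>i. 0<i \<and> i<Suc k \<and> (\<tau>^^j) x = (?p^^i) x)"
  proof (intro allI impI)
    fix j assume j: "0<j \<and> j<m+M \<and> (\<tau>^^j) x \<in> J"
    show "\<exists>i. 0<i \<and> i<Suc k \<and> (\<tau>^^j) x = (?p^^i) x"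
    proof (cases "j < M")
      case True then show ?thesis using M(3) j less_SucI by blast
    next
      case False
      show ?thesis
      proof (cases "j = M")
        case True then show ?thesis using M j by (intro exI[of _ k]) auto
      next
        case False
        with \<open>\<not> j < M\<close> have "0 < j - M" "j - M < m" using j by auto
        moreover have "(\<tau>^^j) x = (\<tau>^^(j-M)) z"
          using \<open>\<not> j < M\<close> M(1) z_def by (metis funpow_add le_add_diff_inverse2 not_less comp_apply)
        ultimately show ?thesis using S j by auto
      qed
    qed
  qed
  then show ?case using e S by (intro exI[of _ "m+M"]) auto
qed

lemma proj_trans:
  assumes "\<tau> permutes K" "finite K" "finite J" "I \<subseteq> J"
  shows "proj_perm B I (proj_perm A J \<tau>) = proj_perm C I \<tau>"
proof
  fix x
  show "proj_perm B I (proj_perm A J \<tau>) x = proj_perm C I \<tau> x"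
  proof (cases "x \<in> I")
    case False then show ?thesis by (simp add: proj_out)
  next
    case True
    let ?p = "proj_perm A J \<tau>"
    have pp: "?p permutes J" using proj_permutes assms by blast
    define k where "k = (LEAST m. 0 < m \<and> (?p^^m) x \<in> I)"
    note S = proj_step[OF pp assms(3) True, where J=B, folded k_def]
    obtain M where M: "(\<tau>^^M) x = (?p^^k) x" "(0<k \<longleftrightarrow> 0<M)"
     "\<forall>j. 0<j \<and> j<M \<and> (\<tau>^^j) x \<in> J \<longrightarrow> (\<exists>i. 0<i \<and> i<k \<and> (\<tau>^^j) x = (?p^^i) x)"
      using proj_trans_aux[OF assms(1,2,3), where x=x and A=A and k=k] True assms(4) by blast
    have S1: "0 < k" "(?p^^k) x \<in> I" "\<And>j. 0<j \<Longrightarrow> j<k \<Longrightarrow> (?p^^j) x \<notin> I"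
      "proj_perm B I ?p x = (?p^^k) x" using S by auto
    have M0: "0 < M" using M(2) S1(1) by simp
    have MI: "(\<tau>^^M) x \<in> I" using M(1) S1(2) by simp
    have Mj: "\<forall>j. 0<j \<and> j<M \<longrightarrow> (\<tau>^^j) x \<notin> I"
    proof (intro allI impI notI)
      fix j assume j: "0<j \<and> j<M" "(\<tau>^^j) x \<in> I"
      then have "(\<tau>^^j) x \<in> J" using assms(4) by blast
      then obtain i where "0<i" "i<k" "(\<tau>^^j) x = (?p^^i) x" using M(3) j by blast
      then show False using S1(3) j(2) by metis
    qed
    have "proj_perm C I \<tau> x = (\<tau>^^M) x"
      by (rule proj_char[OF M0 MI Mj True])
    then show ?thesis using S1(4) M(1) by simp
  qed
qed

lemma conj_pow:
  assumes "f permutes I"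
  shows "(f \<circ> \<tau> \<circ> inv f)^^m = f \<circ> \<tau>^^m \<circ> inv f"
  by (induction m) (simp_all add: fun_eq_iff permutes_inverses[OF assms])

lemma proj_conj:
  assumes "f permutes I"
  shows "proj_perm A I (f \<circ> \<tau> \<circ> inv f) = f \<circ> proj_perm B I \<tau> \<circ> inv f"
proof
  fix x
  have fi: "inv f permutes I" using permutes_inv[OF assms] .
  show "proj_perm A I (f \<circ> \<tau> \<circ> inv f) x = (f \<circ> proj_perm B I \<tau> \<circ> inv f) x"
  proof (cases "x \<in> I")
    case True
    then have y: "inv f x \<in> I" using permutes_in_image[OF fi] by simp
    have pw: "\<And>m. ((f \<circ> \<tau> \<circ> inv f)^^m) x = f ((\<tau>^^m) (inv f x))"
      using conj_pow[OF assms] by simp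
    have eqP: "\<And>m. (0 < m \<and> ((f \<circ> \<tau> \<circ> inv f)^^m) x \<in> I) = (0 < m \<and> (\<tau>^^m) (inv f x) \<in> I)"
      using pw permutes_in_image[OF assms] by presburger
    have L: "(LEAST m. 0 < m \<and> ((f \<circ> \<tau> \<circ> inv f)^^m) x \<in> I) = (LEAST m. 0 < m \<and> (\<tau>^^m) (inv f x) \<in> I)"
      using eqP by presburger
    show ?thesis unfolding proj_perm_def using True y L pw by simp
  next
    case False
    then have "inv f x \<notin> I" using permutes_in_image[OF fi] by simp
    then show ?thesis using False unfolding proj_perm_def by (simp add: permutes_inverses[OF assms])
  qed
qed



lemma fin_perm_supp:
  assumes "fin_perm E g" shows "{x. g x \<noteq> x} \<subseteq> E"
proof
  fix x assume x: "x \<in> {x. g x \<noteq> x}"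
  have p: "g permutes E" using assms unfolding fin_perm_def by simp
  show "x \<in> E"
  proof (rule ccontr)
    assume "x \<notin> E" then have "g x = x" using permutes_not_in[OF p] by simp
    then show False using x by simp
  qed
qed

lemma permutes_shrink:
  assumes "g permutes E" "{x. g x \<noteq> x} \<subseteq> K" shows "g permutes K"
proof -
  have a: "\<forall>x. x \<notin> K \<longrightarrow> g x = x" using assms(2) by blast
  have b: "\<forall>y. \<exists>!x. g x = y" using assms(1) unfolding permutes_def by (elim conjE)
  show ?thesis unfolding permutes_def using a b by (intro conjI)
qed

lemma restr_eq:
  assumes "{x. g x \<noteq> x} \<subseteq> I" shows "restr_perm g I = g"
proof
  fix x show "restr_perm g I x = g x"
  proof (cases "x \<in> I")
    case True then show ?thesis unfolding restr_perm_def by simp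
  next
    case False then have "g x = x" using assms by blast
    then show ?thesis using False unfolding restr_perm_def by simp
  qed
qed

lemma vp_permutes: "virtual_perm E \<sigma> \<Longrightarrow> finite I \<Longrightarrow> I \<subseteq> E \<Longrightarrow> \<sigma> I permutes I"
  unfolding virtual_perm_def by blast

lemma vp_proj: "virtual_perm E \<sigma> \<Longrightarrow> finite J \<Longrightarrow> J \<subseteq> E \<Longrightarrow> I \<subseteq> J \<Longrightarrow> \<sigma> I = proj_perm J I (\<sigma> J)"
  unfolding virtual_perm_def by blast

lemma vp_eq:
  assumes "virtual_perm E s1" "virtual_perm E s2" "finite S" "S \<subseteq> E"
    "\<And>K. finite K \<Longrightarrow> K \<subseteq> E \<Longrightarrow> S \<subseteq> K \<Longrightarrow> s1 K = s2 K"
  shows "s1 = s2"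
proof
  fix I
  show "s1 I = s2 I"
  proof (cases "finite I \<and> I \<subseteq> E")
    case True
    have f: "finite (I \<union> S)" "I \<union> S \<subseteq> E" "I \<subseteq> I \<union> S" using True assms(3,4) by auto
    have "s1 I = proj_perm (I \<union> S) I (s1 (I \<union> S))" by (rule vp_proj[OF assms(1) f])
    moreover have "s2 I = proj_perm (I \<union> S) I (s2 (I \<union> S))" by (rule vp_proj[OF assms(2) f])
    moreover have "s1 (I \<union> S) = s2 (I \<union> S)" using assms(5) f by blast
    ultimately show ?thesis by simp
  next
    case False
    have "s1 I = id" using assms(1) False unfolding virtual_perm_def by blast
    moreover have "s2 I = id" using assms(2) False unfolding virtual_perm_def by blast
    ultimately show ?thesis by simp
  qed
qed

lemma conj_unique:
  assumes "fin_perm E g" "is_conj_vp E g \<sigma> a" "is_conj_vp E g \<sigma> b"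
  shows "a = b"
proof (rule vp_eq[where S="{x. g x \<noteq> x}"])
  show "virtual_perm E a" "virtual_perm E b" using assms unfolding is_conj_vp_def by auto
  show "finite {x. g x \<noteq> x}" using assms(1) unfolding fin_perm_def by auto
  show "{x. g x \<noteq> x} \<subseteq> E" using fin_perm_supp[OF assms(1)] .
  fix K assume "finite K" "K \<subseteq> E" "{x. g x \<noteq> x} \<subseteq> K"
  then show "a K = b K" using assms(2,3) unfolding is_conj_vp_def by auto
qed


lemma conj_permutes:
  "g permutes K \<Longrightarrow> \<tau> permutes K \<Longrightarrow> g \<circ> \<tau> \<circ> inv g permutes K"
  by (intro permutes_compose permutes_inv) auto

lemma conj_exists:
  assumes g: "fin_perm E g" and s: "virtual_perm E \<sigma>"
  shows "is_conj_vp E g \<sigma> (\<lambda>I. if finite I \<and> I \<subseteq> E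
       then proj_perm (I \<union> {x. g x \<noteq> x}) I (g \<circ> \<sigma> (I \<union> {x. g x \<noteq> x}) \<circ> inv g) else id)"
    (is "is_conj_vp E g \<sigma> ?c")
proof -
  define S where "S = {x. g x \<noteq> x}"
  have Sf: "finite S" using g unfolding fin_perm_def S_def by auto
  have SE: "S \<subseteq> E" using fin_perm_supp[OF g] S_def by simp
  have gE: "g permutes E" using g unfolding fin_perm_def by auto
  have gK: "\<And>K. S \<subseteq> K \<Longrightarrow> g permutes K" using permutes_shrink[OF gE] S_def by blast
  have c: "\<And>I. finite I \<Longrightarrow> I \<subseteq> E \<Longrightarrow> ?c I = proj_perm (I \<union> S) I (g \<circ> \<sigma> (I \<union> S) \<circ> inv g)"
    by (simp add: S_def)
  have T: "\<And>I. finite I \<Longrightarrow> I \<subseteq> E \<Longrightarrow> g \<circ> \<sigma> (I \<union> S) \<circ> inv g permutes (I \<union> S)"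
  proof -
    fix I assume "finite I" "I \<subseteq> E"
    then have "finite (I \<union> S)" "I \<union> S \<subseteq> E" using Sf SE by auto
    then show "g \<circ> \<sigma> (I \<union> S) \<circ> inv g permutes (I \<union> S)"
      using conj_permutes[OF gK vp_permutes[OF s]] by blast
  qed
  have vp: "virtual_perm E ?c"
    unfolding virtual_perm_def
  proof (intro conjI allI impI)
    fix I assume I: "finite I \<and> I \<subseteq> E"
    have fS: "finite (I \<union> S)" using I Sf by simp
    have "proj_perm (I \<union> S) I (g \<circ> \<sigma> (I \<union> S) \<circ> inv g) permutes I"
      using proj_permutes[OF T[of I] fS] I by blast
    then show "?c I permutes I" using c[of I] I by simp
  next
    fix I assume "\<not> (finite I \<and> I \<subseteq> E)"
    then show "?c I = id" by (rule if_not_P)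
  next
    fix I J assume IJ: "finite J \<and> J \<subseteq> E \<and> I \<subseteq> J"
    then have I: "finite I" "I \<subseteq> E" using finite_subset by auto
    define Tm where "Tm = g \<circ> \<sigma> (J \<union> S) \<circ> inv g"
    have TJ: "Tm permutes (J \<union> S)" using T IJ Tm_def by simp
    have fJS: "finite (J \<union> S)" using IJ Sf by simp
    have fJ: "finite J" using IJ by simp
    have cJ: "?c J = proj_perm (J \<union> S) J Tm" using c[of J] IJ Tm_def by simp
    have R0: "proj_perm J I (proj_perm (J \<union> S) J Tm) = proj_perm J I Tm"
      by (rule proj_trans[OF TJ fJS fJ, where B=J and A="J \<union> S" and C=J]) (use IJ in blast)
    have R: "proj_perm J I (?c J) = proj_perm J I Tm" using R0 cJ by simp
    have sp: "\<sigma> (I \<union> S) = proj_perm (J \<union> S) (I \<union> S) (\<sigma> (J \<union> S))"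
      by (rule vp_proj[OF s fJS]) (use IJ SE in blast)+
    have gIS: "g permutes I \<union> S" by (rule gK) blast
    have cc: "proj_perm (J \<union> S) (I \<union> S) Tm = g \<circ> proj_perm (J \<union> S) (I \<union> S) (\<sigma> (J \<union> S)) \<circ> inv g"
      unfolding Tm_def by (rule proj_conj[OF gIS])
    have cI: "?c I = proj_perm (I \<union> S) I (g \<circ> \<sigma> (I \<union> S) \<circ> inv g)" using c[of I] I by simp
    have fIS: "finite (I \<union> S)" using I Sf by simp
    have "?c I = proj_perm (I \<union> S) I (proj_perm (J \<union> S) (I \<union> S) Tm)" using cI cc sp by simp
    also have "\<dots> = proj_perm J I Tm"
      by (rule proj_trans[OF TJ fJS fIS, where B="I \<union> S" and A="J \<union> S" and C=J]) blast
    finally show "?c I = proj_perm J I (?c J)" using R by simp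
  qed
  show ?thesis unfolding is_conj_vp_def
  proof (intro conjI allI impI vp)
    fix I assume I: "finite I \<and> I \<subseteq> E \<and> {x. g x \<noteq> x} \<subseteq> I"
    then have IS: "I \<union> S = I" using S_def by auto
    have "?c I = proj_perm I I (g \<circ> \<sigma> I \<circ> inv g)" using c I IS by simp
    also have "\<dots> = g \<circ> proj_perm I I (\<sigma> I) \<circ> inv g"
      using proj_conj[OF gK] I S_def by simp
    also have "\<dots> = g \<circ> \<sigma> I \<circ> inv g" using vp_proj[OF s, of I I] I by simp
    finally have fin: "?c I = g \<circ> \<sigma> I \<circ> inv g" .
    have r: "restr_perm g I = g" using restr_eq I by blast
    show "?c I = restr_perm g I \<circ> \<sigma> I \<circ> inv (restr_perm g I)"
      unfolding r by (rule fin)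
  qed
qed


lemma conj_ex1:
  assumes "fin_perm E g" "virtual_perm E \<sigma>"
  shows "\<exists>!\<sigma>'. is_conj_vp E g \<sigma> \<sigma>'"
  using conj_exists[OF assms] conj_unique[OF assms(1)] by blast

lemma conj_vp_is:
  assumes "fin_perm E g" "virtual_perm E \<sigma>"
  shows "is_conj_vp E g \<sigma> (conj_vp E g \<sigma>)"
  unfolding conj_vp_def by (rule theI'[OF conj_ex1[OF assms]])

lemma conj_vp_vp:
  assumes "fin_perm E g" "virtual_perm E \<sigma>"
  shows "virtual_perm E (conj_vp E g \<sigma>)"
  using conj_vp_is[OF assms] unfolding is_conj_vp_def by blast

lemma conj_vp_val:
  assumes "fin_perm E g" "virtual_perm E \<sigma>" "finite K" "K \<subseteq> E" "{x. g x \<noteq> x} \<subseteq> K"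
  shows "conj_vp E g \<sigma> K = g \<circ> \<sigma> K \<circ> inv g"
proof -
  have "conj_vp E g \<sigma> K = restr_perm g K \<circ> \<sigma> K \<circ> inv (restr_perm g K)"
    using conj_vp_is[OF assms(1,2)] assms(3-5) unfolding is_conj_vp_def by blast
  then show ?thesis using restr_eq[OF assms(5)] by simp
qed

lemma fin_perm_id: "fin_perm E id"
  unfolding fin_perm_def by (simp add: permutes_id)

lemma conj_id:
  assumes "virtual_perm E \<sigma>" shows "conj_vp E id \<sigma> = \<sigma>"
proof -
  have r: "\<And>I. restr_perm id I = id" unfolding restr_perm_def by auto
  have "is_conj_vp E id \<sigma> \<sigma>" unfolding is_conj_vp_def using assms by (simp add: r)
  then show ?thesis using conj_unique[OF fin_perm_id conj_vp_is[OF fin_perm_id assms]] by blast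
qed

lemma fin_perm_comp:
  assumes "fin_perm E g" "fin_perm E h" shows "fin_perm E (g \<circ> h)"
proof -
  have "{x. (g \<circ> h) x \<noteq> x} \<subseteq> {x. g x \<noteq> x} \<union> {x. h x \<noteq> x}" by auto
  moreover have "finite ({x. g x \<noteq> x} \<union> {x. h x \<noteq> x})" using assms unfolding fin_perm_def by simp
  ultimately have "finite {x. (g \<circ> h) x \<noteq> x}" by (rule finite_subset)
  moreover have "g \<circ> h permutes E" using assms unfolding fin_perm_def by (simp add: permutes_compose)
  ultimately show ?thesis unfolding fin_perm_def by simp
qed

lemma conj_comp:
  assumes g: "fin_perm E g" and h: "fin_perm E h" and s: "virtual_perm E \<sigma>"
  shows "conj_vp E (g \<circ> h) \<sigma> = conj_vp E g (conj_vp E h \<sigma>)"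
proof -
  define \<rho> where "\<rho> = conj_vp E h \<sigma>"
  define \<tau> where "\<tau> = conj_vp E g \<rho>"
  have r: "virtual_perm E \<rho>" unfolding \<rho>_def by (rule conj_vp_vp[OF h s])
  have t: "virtual_perm E \<tau>" unfolding \<tau>_def by (rule conj_vp_vp[OF g r])
  have gh: "fin_perm E (g \<circ> h)" by (rule fin_perm_comp[OF g h])
  have gE: "g permutes E" and hE: "h permutes E" using g h unfolding fin_perm_def by auto
  have ghE: "g \<circ> h permutes E" using gh unfolding fin_perm_def by auto
  have Sg: "finite {x. g x \<noteq> x}" "{x. g x \<noteq> x} \<subseteq> E" using g fin_perm_supp[OF g] unfolding fin_perm_def by auto
  have Sh: "finite {x. h x \<noteq> x}" "{x. h x \<noteq> x} \<subseteq> E" using h fin_perm_supp[OF h] unfolding fin_perm_def by auto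
  have "is_conj_vp E (g \<circ> h) \<sigma> \<tau>"
    unfolding is_conj_vp_def
  proof (intro conjI allI impI t)
    fix I assume I: "finite I \<and> I \<subseteq> E \<and> {x. (g \<circ> h) x \<noteq> x} \<subseteq> I"
    define K where "K = I \<union> {x. g x \<noteq> x} \<union> {x. h x \<noteq> x}"
    have K: "finite K" "K \<subseteq> E" "I \<subseteq> K" "{x. g x \<noteq> x} \<subseteq> K" "{x. h x \<noteq> x} \<subseteq> K"
      using I Sg Sh unfolding K_def by auto
    have tI: "\<tau> I = proj_perm K I (\<tau> K)" by (rule vp_proj[OF t K(1,2,3)])
    have tK: "\<tau> K = g \<circ> \<rho> K \<circ> inv g" unfolding \<tau>_def by (rule conj_vp_val[OF g r K(1,2,4)])
    have rK: "\<rho> K = h \<circ> \<sigma> K \<circ> inv h" unfolding \<rho>_def by (rule conj_vp_val[OF h s K(1,2,5)])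
    have iv: "inv (g \<circ> h) = inv h \<circ> inv g"
      by (rule o_inv_distrib[OF permutes_bij[OF gE] permutes_bij[OF hE]])
    have tK2: "\<tau> K = (g \<circ> h) \<circ> \<sigma> K \<circ> inv (g \<circ> h)" unfolding tK rK iv by (simp add: o_assoc)
    have ghI: "g \<circ> h permutes I" using permutes_shrink[OF ghE] I by blast
    have "\<tau> I = (g \<circ> h) \<circ> proj_perm K I (\<sigma> K) \<circ> inv (g \<circ> h)"
      unfolding tI tK2 by (rule proj_conj[OF ghI])
    also have "proj_perm K I (\<sigma> K) = \<sigma> I" by (rule vp_proj[OF s K(1,2,3), symmetric])
    finally have fin: "\<tau> I = (g \<circ> h) \<circ> \<sigma> I \<circ> inv (g \<circ> h)" .
    have re: "restr_perm (g \<circ> h) I = g \<circ> h" using restr_eq I by blast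
    show "\<tau> I = restr_perm (g \<circ> h) I \<circ> \<sigma> I \<circ> inv (restr_perm (g \<circ> h) I)"
      unfolding re by (rule fin)
  qed
  then have "conj_vp E (g \<circ> h) \<sigma> = \<tau>"
    using conj_unique[OF gh conj_vp_is[OF gh s]] by blast
  then show ?thesis unfolding \<tau>_def \<rho>_def .
qed

lemma cyc_fwd:
  assumes g: "fin_perm E g" and s: "virtual_perm E \<sigma>" and xy: "(x, y) \<in> vp_rel E \<sigma>"
  shows "(g x, g y) \<in> vp_rel E (conj_vp E g \<sigma>)"
proof -
  obtain I n where I: "finite I" "I \<subseteq> E" "x \<in> I" "y \<in> I" and n: "((\<sigma> I)^^n) x = y"
    using xy unfolding vp_rel_def same_cycle_def by blast
  define K where "K = I \<union> {x. g x \<noteq> x}"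
  have Sg: "finite {x. g x \<noteq> x}" "{x. g x \<noteq> x} \<subseteq> E" using g fin_perm_supp[OF g] unfolding fin_perm_def by auto
  have K: "finite K" "K \<subseteq> E" "I \<subseteq> K" "{x. g x \<noteq> x} \<subseteq> K" using I Sg unfolding K_def by auto
  have gE: "g permutes E" using g unfolding fin_perm_def by auto
  have gK: "g permutes K" using permutes_shrink[OF gE K(4)] .
  have sK: "\<sigma> K permutes K" by (rule vp_permutes[OF s K(1,2)])
  have sI: "\<sigma> I = proj_perm K I (\<sigma> K)" by (rule vp_proj[OF s K(1,2,3)])
  obtain M where M: "((proj_perm K I (\<sigma> K))^^n) x = ((\<sigma> K)^^M) x"
    using proj_iter[OF sK K(1) I(3), where J=K and n=n] by blast
  have yM: "((\<sigma> K)^^M) x = y" using M n sI by simp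
  have tK: "conj_vp E g \<sigma> K = g \<circ> \<sigma> K \<circ> inv g" by (rule conj_vp_val[OF g s K(1,2,4)])
  have "((conj_vp E g \<sigma> K)^^M) (g x) = g (((\<sigma> K)^^M) (inv g (g x)))"
    unfolding tK conj_pow[OF gK] by simp
  also have "\<dots> = g y" using yM permutes_inverses(2)[OF gK] by simp
  finally have c: "same_cycle (conj_vp E g \<sigma> K) (g x) (g y)" unfolding same_cycle_def by blast
  have gxK: "g x \<in> K" "g y \<in> K" using permutes_in_image[OF gK] I K by auto
  have gxE: "g x \<in> E" "g y \<in> E" using gxK K by auto
  show ?thesis unfolding vp_rel_def using gxK gxE c K by blast
qed

lemma fin_perm_inv:
  assumes g: "fin_perm E g" shows "fin_perm E (inv g)"
proof -
  have gE: "g permutes E" using g unfolding fin_perm_def by auto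
  have "{x. inv g x \<noteq> x} = {x. g x \<noteq> x}" using permutes_inv_eq[OF gE] by metis
  then show ?thesis using g permutes_inv[OF gE] unfolding fin_perm_def by simp
qed

lemma conj_inv:
  assumes g: "fin_perm E g" and s: "virtual_perm E \<sigma>"
  shows "conj_vp E (inv g) (conj_vp E g \<sigma>) = \<sigma>"
proof -
  have gE: "g permutes E" using g unfolding fin_perm_def by auto
  have "conj_vp E (inv g) (conj_vp E g \<sigma>) = conj_vp E (inv g \<circ> g) \<sigma>"
    using conj_comp[OF fin_perm_inv[OF g] g s] by simp
  also have "inv g \<circ> g = id" by (rule permutes_inv_o(2)[OF gE])
  finally have "conj_vp E (inv g) (conj_vp E g \<sigma>) = conj_vp E id \<sigma>" .
  then show ?thesis using conj_id[OF s] by (rule trans)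
qed

lemma cyc_class:
  assumes g: "fin_perm E g" and s: "virtual_perm E \<sigma>" and x: "x \<in> E"
  shows "vp_rel E (conj_vp E g \<sigma>) `` {g x} = g ` (vp_rel E \<sigma> `` {x})"
proof
  have gE: "g permutes E" using g unfolding fin_perm_def by auto
  show "vp_rel E (conj_vp E g \<sigma>) `` {g x} \<subseteq> g ` (vp_rel E \<sigma> `` {x})"
  proof
    fix z assume "z \<in> vp_rel E (conj_vp E g \<sigma>) `` {g x}"
    then have "(g x, z) \<in> vp_rel E (conj_vp E g \<sigma>)" by simp
    then have "(inv g (g x), inv g z) \<in> vp_rel E (conj_vp E (inv g) (conj_vp E g \<sigma>))"
      by (rule cyc_fwd[OF fin_perm_inv[OF g] conj_vp_vp[OF g s]])
    then have "(x, inv g z) \<in> vp_rel E \<sigma>"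
      unfolding conj_inv[OF g s] permutes_inverses(2)[OF gE] .
    moreover have "z = g (inv g z)" using permutes_inverses(1)[OF gE] by simp
    ultimately show "z \<in> g ` (vp_rel E \<sigma> `` {x})" by blast
  qed
  show "g ` (vp_rel E \<sigma> `` {x}) \<subseteq> vp_rel E (conj_vp E g \<sigma>) `` {g x}"
    using cyc_fwd[OF g s] by blast
qed

lemma cycles:
  assumes g: "fin_perm E g" and s: "virtual_perm E \<sigma>"
  shows "vp_cycles E (conj_vp E g \<sigma>) = (\<lambda>C. g ` C) ` vp_cycles E \<sigma>"
proof -
  have gE: "g permutes E" using g unfolding fin_perm_def by auto
  show ?thesis unfolding vp_cycles_def
  proof
    show "E // vp_rel E (conj_vp E g \<sigma>) \<subseteq> (\<lambda>C. g ` C) ` (E // vp_rel E \<sigma>)"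
    proof
      fix C assume "C \<in> E // vp_rel E (conj_vp E g \<sigma>)"
      then obtain w where w: "w \<in> E" "C = vp_rel E (conj_vp E g \<sigma>) `` {w}" by (elim quotientE)
      define x where "x = inv g w"
      have xE: "x \<in> E" unfolding x_def using permutes_in_image[OF permutes_inv[OF gE]] w by simp
      have wx: "w = g x" unfolding x_def using permutes_inverses(1)[OF gE] by simp
      have "C = g ` (vp_rel E \<sigma> `` {x})" using w(2) cyc_class[OF g s xE] wx by simp
      moreover have "vp_rel E \<sigma> `` {x} \<in> E // vp_rel E \<sigma>" using xE by (rule quotientI)
      ultimately show "C \<in> (\<lambda>C. g ` C) ` (E // vp_rel E \<sigma>)" by blast
    qed
    show "(\<lambda>C. g ` C) ` (E // vp_rel E \<sigma>) \<subseteq> E // vp_rel E (conj_vp E g \<sigma>)"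
    proof
      fix D assume "D \<in> (\<lambda>C. g ` C) ` (E // vp_rel E \<sigma>)"
      then obtain C where C: "C \<in> E // vp_rel E \<sigma>" "D = g ` C" by blast
      then obtain x where x: "x \<in> E" "C = vp_rel E \<sigma> `` {x}" by (elim quotientE)
      have "D = vp_rel E (conj_vp E g \<sigma>) `` {g x}" using C(2) x cyc_class[OF g s x(1)] by simp
      moreover have "g x \<in> E" using permutes_in_image[OF gE] x by simp
      ultimately show "D \<in> E // vp_rel E (conj_vp E g \<sigma>)" using quotientI by metis
    qed
  qed
qed

theorem proposition2p6:
  fixes E :: "'a set"
  shows "(\<forall>g \<sigma>. fin_perm E g \<and> virtual_perm E \<sigma> \<longrightarrow> (\<exists>!\<sigma>'. is_conj_vp E g \<sigma> \<sigma>'))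
    \<and> (\<forall>g \<sigma>. fin_perm E g \<and> virtual_perm E \<sigma> \<longrightarrow> virtual_perm E (conj_vp E g \<sigma>))
    \<and> (\<forall>\<sigma>. virtual_perm E \<sigma> \<longrightarrow> conj_vp E id \<sigma> = \<sigma>)
    \<and> (\<forall>g h \<sigma>. fin_perm E g \<and> fin_perm E h \<and> virtual_perm E \<sigma> \<longrightarrow>
          conj_vp E (g \<circ> h) \<sigma> = conj_vp E g (conj_vp E h \<sigma>))
    \<and> (\<forall>g \<sigma>. fin_perm E g \<and> virtual_perm E \<sigma> \<longrightarrow>
          vp_cycles E (conj_vp E g \<sigma>) = (\<lambda>C. g ` C) ` vp_cycles E \<sigma>)"
  apply (intro conjI allI impI)
  subgoal using conj_ex1 by blast
  subgoal using conj_vp_vp by blast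
  subgoal using conj_id by blast
  subgoal using conj_comp by blast
  subgoal using cycles by blast
  done

end
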